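(* In the multi-parameter setting described in the context, suppose $p_j(\theta)>0$ for all $j$ and all $\theta\in\Theta$. Then $H_\theta=C_\Upsilon(\theta)$ for all $\theta\in\Theta$ if and only if the channel is quasi-classical, i.e. the vectors $|w_k(\theta)\rangle$ do not depend on $\theta$.
   Context: Let $\Theta\subseteq\mathbb{R}^p$ be open (and connected) and $D\ge1$. For $\theta\in\Theta$ let $\Phi_\theta$ be a quantum channel on $D\times D$ complex matrices and $\rho_0=|\psi_0\rangle\langle\psi_0|$ a fixed pure input state. Canonical Kraus operators are $D\times D$ matrices $\Upsilon_1(\theta),\dots,\Upsilon_D(\theta)$, differentiable in $\theta$, with $\sum_k\Upsilon_k^\dagger\Upsilon_k=\mathbb{I}$, $\Phi_\theta(\rho)=\sum_k\Upsilon_k\rho\Upsilon_k^\dagger$, and $\mathrm{tr}\{\Upsilon_k\rho_0\Upsilon_j^\dagger\}=\delta_{jk}p_k(\theta)$. Write $\Upsilon_k(\theta)|\psi_0\rangle=\sqrt{p_k(\theta)}|w_k(\theta)\rangle$ with $\{|w_k(\theta)\rangle\}$ an orthonormal basis of $\mathbb{C}^D$ differentiable in $\theta$; the output is $\rho_\theta=\sum_kp_k|w_k\rangle\langle w_k|$. $C_\Upsilon(\theta)$ is the $p\times p$ matrix with entries $4\sum_l\mathrm{Re}\,\mathrm{tr}\{\frac{\partial\Upsilon_l}{\partial\theta^j}\rho_0(\frac{\partial\Upsilon_l}{\partial\theta^k})^\dagger\}$ and $H_\theta$ the SLD quantum information matrix with entries $\mathrm{Re}\,\mathrm{tr}\{\lambda^j\rho_\theta\lambda^k\}$,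 $\lambda^j$ Hermitian with $\frac{\partial\rho_\theta}{\partial\theta^j}=\frac12(\rho_\theta\lambda^j+\lambda^j\rho_\theta)$. *)

theory Defs
  imports "HOL-Analysis.Analysis"
begin

(* D x D complex matrices are complex^'d^'d with D = CARD('d); the parameter
   space R^p is real^'p with p = CARD('p). *)

definition adj :: "complex^'d^'d \<Rightarrow> complex^'d^'d" where
  "adj A = (\<chi> i j. cnj (A $ j $ i))"

definition hermitian :: "complex^'d^'d \<Rightarrow> bool" where
  "hermitian A \<longleftrightarrow> adj A = A"

definition ketbra :: "complex^'d \<Rightarrow> complex^'d \<Rightarrow> complex^'d^'d" where
  "ketbra x y = (\<chi> i j. x $ i * cnj (y $ j))"

definition braket :: "complex^'d \<Rightarrow> complex^'d \<Rightarrow> complex" where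
  "braket x y = (\<Sum>i\<in>UNIV. cnj (x $ i) * y $ i)"

definition pderiv :: "(real^'p \<Rightarrow> 'b::real_normed_vector) \<Rightarrow> real^'p \<Rightarrow> 'p \<Rightarrow> 'b" where
  "pderiv f \<theta> j = frechet_derivative f (at \<theta>) (axis j 1)"

definition channel_out ::
  "('d \<Rightarrow> real^'p \<Rightarrow> complex^'d^'d) \<Rightarrow> complex^'d^'d \<Rightarrow> real^'p \<Rightarrow> complex^'d^'d" where
  "channel_out Ups rho0 \<theta> = (\<Sum>k\<in>UNIV. Ups k \<theta> ** rho0 ** adj (Ups k \<theta>))"

definition is_SLD :: "complex^'d^'d \<Rightarrow> complex^'d^'d \<Rightarrow> complex^'d^'d \<Rightarrow> bool" where
  "is_SLD rho drho L \<longleftrightarrow> hermitian L \<and> drho = (1/2::real) *\<^sub>R (rho ** L + L ** rho)"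

definition SLD_QFI :: "(real^'p \<Rightarrow> complex^'d^'d) \<Rightarrow> real^'p \<Rightarrow> real^'p^'p" where
  "SLD_QFI rho \<theta> =
     (let L = (\<lambda>j. SOME L. is_SLD (rho \<theta>) (pderiv rho \<theta> j) L)
      in \<chi> j k. Re (trace (L j ** rho \<theta> ** L k)))"

definition C_Ups ::
  "('d \<Rightarrow> real^'p \<Rightarrow> complex^'d^'d) \<Rightarrow> complex^'d^'d \<Rightarrow> real^'p \<Rightarrow> real^'p^'p" where
  "C_Ups Ups rho0 \<theta> =
     (\<chi> j k. 4 * (\<Sum>l\<in>UNIV. Re (trace (pderiv (Ups l) \<theta> j ** rho0 ** adj (pderiv (Ups l) \<theta> k)))))"

end

theory Submission
  imports Defs
begin


lemma cscaleR: "c *\<^sub>R (z::complex) = of_real c * z"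
  by (simp add: scaleR_conv_of_real)

lemma adj_adj[simp]: "adj (adj A) = A"
  by (simp add: adj_def vec_eq_iff)

lemma adj_mult: "adj (A ** B) = adj B ** adj A"
  by (simp add: adj_def vec_eq_iff matrix_matrix_mult_def mult.commute)

lemma adj_add: "adj (A + B) = adj A + adj B"
  by (simp add: adj_def vec_eq_iff)

lemma adj_sum: "adj (sum f S) = (\<Sum>x\<in>S. adj (f x))"
  by (induction S rule: infinite_finite_induct) (auto simp: adj_add adj_def vec_eq_iff)

lemma adj_scaleR: "adj (c *\<^sub>R A) = c *\<^sub>R adj A"
  by (simp add: adj_def vec_eq_iff cscaleR)

lemma braket_adj: "braket x (A *v y) = braket (adj A *v x) y"
proof -
  have "braket x (A *v y) = (\<Sum>i\<in>UNIV. \<Sum>j\<in>UNIV. cnj (x$i) * A$i$j * y$j)"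
    by (simp add: braket_def matrix_vector_mult_def sum_distrib_left mult_ac)
  also have "\<dots> = (\<Sum>j\<in>UNIV. \<Sum>i\<in>UNIV. cnj (x$i) * A$i$j * y$j)"
    by (rule sum.swap)
  also have "\<dots> = braket (adj A *v x) y"
    unfolding braket_def adj_def matrix_vector_mult_def
    by (simp add: sum_distrib_right sum_distrib_left mult.commute mult.left_commute)
  finally show ?thesis .
qed

lemma ketbra_mult_vec: "ketbra x y *v z = braket y z *s x"
  by (simp add: ketbra_def braket_def matrix_vector_mult_def vec_eq_iff sum_distrib_left mult_ac)

lemma mat_ketbra: "A ** ketbra x y = ketbra (A *v x) y"
  by (simp add: ketbra_def matrix_vector_mult_def matrix_matrix_mult_def vec_eq_iff sum_distrib_right sum_distrib_left mult_ac)

lemma ketbra_mat: "ketbra x y ** A = ketbra x (adj A *v y)"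
  by (simp add: ketbra_def adj_def matrix_vector_mult_def matrix_matrix_mult_def vec_eq_iff sum_distrib_left mult_ac)

lemma trace_ketbra: "trace (ketbra x y) = braket y x"
  by (simp add: trace_def ketbra_def braket_def mult.commute)

lemma adj_ketbra: "adj (ketbra x y) = ketbra y x"
  by (simp add: adj_def ketbra_def vec_eq_iff)

lemma braket_cnj: "cnj (braket x y) = braket y x"
  by (simp add: braket_def mult.commute)

lemma braket_add_right: "braket x (y + z) = braket x y + braket x z"
  by (simp add: braket_def algebra_simps sum.distrib)
lemma braket_add_left: "braket (x + y) z = braket x z + braket y z"
  by (simp add: braket_def algebra_simps sum.distrib)
lemma braket_diff_right: "braket x (y - z) = braket x y - braket x z"
  by (simp add: braket_def algebra_simps sum_subtractf)
lemma braket_diff_left: "braket (x - y) z = braket x z - braket y z"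
  by (simp add: braket_def algebra_simps sum_subtractf)
lemma braket_smult_right: "braket x (c *s y) = c * braket x y"
  by (simp add: braket_def sum_distrib_left mult_ac)
lemma braket_smult_left: "braket (c *s x) y = cnj c * braket x y"
  by (simp add: braket_def sum_distrib_left mult_ac)
lemma braket_scaleR_right: "braket x (c *\<^sub>R y) = c * braket x y"
  by (simp add: braket_def sum_distrib_left mult_ac cscaleR)
lemma braket_scaleR_left: "braket (c *\<^sub>R x) y = c * braket x y"
  by (simp add: braket_def sum_distrib_left mult_ac cscaleR)
lemma braket_zero_right[simp]: "braket x 0 = 0" by (simp add: braket_def zero_vec_def)
lemma braket_zero_left[simp]: "braket 0 x = 0" by (simp add: braket_def zero_vec_def)
lemma braket_sum_right: "braket x (sum f S) = (\<Sum>s\<in>S. braket x (f s))"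
  by (induction S rule: infinite_finite_induct) (simp_all add: braket_add_right)
lemma braket_sum_left: "braket (sum f S) x = (\<Sum>s\<in>S. braket (f s) x)"
  by (induction S rule: infinite_finite_induct) (simp_all add: braket_add_left)
lemma braket_self_real: "braket x x = complex_of_real (Re (braket x x))"
  using braket_cnj[of x x] by (simp add: complex_eq_iff)

lemma braket_self_eq0: "braket x x = 0 \<Longrightarrow> x = 0"
proof -
  assume h: "braket x x = 0"
  have "braket x x = (\<Sum>i\<in>UNIV. complex_of_real ((cmod (x$i))\<^sup>2))"
    by (simp add: braket_def complex_norm_square[symmetric] mult.commute del: of_real_power)
  hence "(\<Sum>i\<in>UNIV. (cmod (x$i))\<^sup>2) = 0" using h
    by (metis of_real_eq_0_iff of_real_sum)
  hence "\<forall>i\<in>UNIV. (cmod (x$i))\<^sup>2 = 0" by (subst (asm) sum_nonneg_eq_0_iff) auto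
  thus "x = 0" by (simp add: vec_eq_iff)
qed

lemma Re_braket_self_nonneg: "Re (braket x x) \<ge> 0"
  by (simp add: braket_def Re_sum sum_nonneg)

lemma ketbra_add_left: "ketbra (x + y) z = ketbra x z + ketbra y z"
  by (simp add: ketbra_def vec_eq_iff algebra_simps)
lemma ketbra_add_right: "ketbra z (x + y) = ketbra z x + ketbra z y"
  by (simp add: ketbra_def vec_eq_iff algebra_simps)
lemma ketbra_scaleR_left: "ketbra (c *\<^sub>R x) y = c *\<^sub>R ketbra x y"
  by (simp add: ketbra_def vec_eq_iff cscaleR)
lemma ketbra_scaleR_right: "ketbra x (c *\<^sub>R y) = c *\<^sub>R ketbra x y"
  by (simp add: ketbra_def vec_eq_iff cscaleR mult_ac)
lemma ketbra_smult_right: "ketbra x (c *s y) = ketbra (cnj c *s x) y"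
  by (simp add: ketbra_def vec_eq_iff mult_ac)




lemma cnj_braket_swap: "braket y x = cnj (braket x y)"
  by (simp add: braket_cnj)

lemma sum_matrix_vector: "(sum f S) *v x = (\<Sum>s\<in>S. f s *v x)"
  by (induction S rule: infinite_finite_induct) (simp_all add: matrix_vector_mult_add_rdistrib)

lemma matrix_mult_sum_right: "A ** (sum f S) = (\<Sum>s\<in>S. A ** f s)"
  by (induction S rule: infinite_finite_induct) (simp_all add: matrix_add_ldistrib)

lemma matrix_add_rdistrib': "((B::complex^'n^'m) + C) ** A = B ** A + C ** A"
  by (simp add: matrix_matrix_mult_def vec_eq_iff distrib_right sum.distrib)

lemma matrix_mult_sum_left: "(sum f S) ** (A::complex^'n^'n) = (\<Sum>s\<in>S. f s ** A)"
  by (induction S rule: infinite_finite_induct) (simp_all add: matrix_add_rdistrib')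

lemma trace_zero[simp]: "trace (0::complex^'n^'n) = 0"
  by (simp add: trace_def)

lemma smult_if: "(if P then c else 0) *s x = (if P then c *s x else (0::complex^'n))"
  by simp

lemma mult_if01: "(x::complex) * (if P then 1 else 0) = (if P then x else 0)"
  by simp

lemma mult_if01': "(if P then 1 else 0) * (x::complex) = (if P then x else 0)"
  by simp

lemma if0_mult: "(if P then c else 0) * (x::complex) = (if P then c * x else 0)"
  by simp

lemma mult_if0: "(x::complex) * (if P then c else 0) = (if P then x * c else 0)"
  by simp

lemma trace_sum: "trace (sum (f::_\<Rightarrow>complex^'n^'n) S) = (\<Sum>s\<in>S. trace (f s))"
  by (induction S rule: infinite_finite_induct) (simp_all add: trace_add)

lemma mv_smult: "(A::complex^'n^'m) *v (c *s x) = c *s (A *v x)"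
  by (simp add: matrix_vector_mult_def vec_eq_iff sum_distrib_left mult_ac)

lemma mv_scaleR_mat: "(c *\<^sub>R (A::complex^'n^'m)) *v x = c *\<^sub>R (A *v x)"
  by (simp add: matrix_vector_mult_def vec_eq_iff sum_distrib_left mult_ac cscaleR)

lemma trace_scaleR: "trace (c *\<^sub>R (A::complex^'n^'n)) = c *\<^sub>R trace A"
  by (simp add: trace_def scaleR_sum_right)

definition ON :: "('d \<Rightarrow> complex^'d) \<Rightarrow> bool" where
  "ON w \<longleftrightarrow> (\<forall>j k. braket (w j) (w k) = (if j = k then 1 else 0))"

lemma onb_complete:
  fixes w :: "'d \<Rightarrow> complex^'d"
  assumes "ON w"
  shows "(\<Sum>l\<in>UNIV. ketbra (w l) (w l)) = mat 1"
proof -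
  define W :: "complex^'d^'d" where "W = (\<chi> i l. w l $ i)"
  have "adj W ** W = mat 1"
    using assms by (simp add: ON_def W_def adj_def matrix_matrix_mult_def mat_def vec_eq_iff braket_def)
  hence "W ** adj W = mat 1" by (simp add: matrix_left_right_inverse)
  moreover have "W ** adj W = (\<Sum>l\<in>UNIV. ketbra (w l) (w l))"
    by (simp add: W_def adj_def matrix_matrix_mult_def vec_eq_iff ketbra_def sum_component)
  ultimately show ?thesis by simp
qed

lemma onb_expand:
  assumes "ON w"
  shows "x = (\<Sum>l\<in>UNIV. braket (w l) x *s w l)"
proof -
  have "x = mat 1 *v x" by simp
  also have "\<dots> = (\<Sum>l\<in>UNIV. braket (w l) x *s w l)"
    by (simp add: onb_complete[OF assms, symmetric] sum_matrix_vector ketbra_mult_vec)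
  finally show ?thesis .
qed

lemma onb_zero:
  assumes "ON w" "\<And>m. braket (w m) x = 0"
  shows "x = 0"
  using onb_expand[OF assms(1), of x] assms(2) by simp

lemma onb_vec_eq:
  assumes "ON w" "\<And>m. braket (w m) x = braket (w m) y"
  shows "x = y"
  using onb_zero[OF assms(1), of "x - y"] assms(2) by (simp add: braket_diff_right)

lemma onb_mat_eq:
  assumes "ON w" "\<And>m l. braket (w m) (A *v w l) = braket (w m) (B *v w l)"
  shows "A = B"
proof -
  have e: "A *v w l = B *v w l" for l
    using onb_vec_eq[OF assms(1)] assms(2) by blast
  have "A = A ** mat 1" by simp
  also have "\<dots> = (\<Sum>l\<in>UNIV. ketbra (A *v w l) (w l))"
    by (simp add: onb_complete[OF assms(1), symmetric] matrix_mult_sum_right mat_ketbra)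
  also have "\<dots> = (\<Sum>l\<in>UNIV. ketbra (B *v w l) (w l))" using e by simp
  also have "\<dots> = B ** mat 1"
    by (simp add: onb_complete[OF assms(1), symmetric] matrix_mult_sum_right mat_ketbra)
  finally show ?thesis by simp
qed




locale pt =
  fixes w :: "'d \<Rightarrow> complex^'d" and s :: "'d \<Rightarrow> real" and a :: "'d \<Rightarrow> complex^'d"
  assumes onw: "ON w" and spos: "\<And>l. s l > 0"
begin

definition "v l = complex_of_real (s l) *s w l"
definition "rho = (\<Sum>l\<in>UNIV. ketbra (v l) (v l))"
definition "Drho = (\<Sum>l\<in>UNIV. ketbra (a l) (v l) + ketbra (v l) (a l))"

lemma ww: "braket (w m) (w l) = (if m = l then 1 else 0)"
  using onw by (simp add: ON_def)

lemma vw: "braket (v k) (w l) = (if k = l then complex_of_real (s k) else 0)"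
  by (simp add: v_def braket_smult_left ww)

lemma wv: "braket (w m) (v k) = (if m = k then complex_of_real (s k) else 0)"
  by (simp add: v_def braket_smult_right ww)

lemma rho_w: "rho *v w l = complex_of_real ((s l)\<^sup>2) *s w l"
proof -
  have "rho *v w l = (\<Sum>k\<in>UNIV. braket (v k) (w l) *s v k)"
    by (simp add: rho_def sum_matrix_vector ketbra_mult_vec)
  also have "\<dots> = complex_of_real (s l) *s v l"
    by (simp add: vw smult_if)
  finally show ?thesis by (simp add: v_def power2_eq_square)
qed

lemma adj_rho: "adj rho = rho"
  by (simp add: rho_def adj_sum adj_ketbra)

lemma adj_Drho: "adj Drho = Drho"
  by (simp add: Drho_def adj_sum adj_ketbra adj_add add.commute)

lemma K: "braket (w m) ((rho ** L + L ** rho) *v w l)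
   = complex_of_real ((s m)\<^sup>2 + (s l)\<^sup>2) * braket (w m) (L *v w l)"
proof -
  have 1: "braket (w m) ((rho ** L) *v w l) = complex_of_real ((s m)\<^sup>2) * braket (w m) (L *v w l)"
    by (simp add: matrix_vector_mul_assoc[symmetric] braket_adj[of "w m" rho] adj_rho rho_w
        braket_smult_left)
  have 2: "braket (w m) ((L ** rho) *v w l) = complex_of_real ((s l)\<^sup>2) * braket (w m) (L *v w l)"
    by (simp add: matrix_vector_mul_assoc[symmetric] rho_w mv_smult braket_smult_right)
  show ?thesis using 1 2 by (simp add: matrix_vector_mult_add_rdistrib braket_add_right algebra_simps)
qed

lemma Drho_elem: "braket (w m) (Drho *v w l)
   = complex_of_real (s l) * braket (w m) (a l) + complex_of_real (s m) * braket (a m) (w l)"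
proof -
  have "Drho *v w l = (\<Sum>k\<in>UNIV. braket (v k) (w l) *s a k + braket (a k) (w l) *s v k)"
    by (simp add: Drho_def sum_matrix_vector ketbra_mult_vec matrix_vector_mult_add_rdistrib)
  hence "braket (w m) (Drho *v w l)
      = (\<Sum>k\<in>UNIV. braket (v k) (w l) * braket (w m) (a k) + braket (a k) (w l) * braket (w m) (v k))"
    by (simp add: braket_sum_right braket_add_right braket_smult_right)
  also have "\<dots> = complex_of_real (s l) * braket (w m) (a l) + complex_of_real (s m) * braket (a m) (w l)"
    by (simp add: vw wv if0_mult mult_if0 sum.distrib mult.commute)
  finally show ?thesis .
qed

lemma SLD_coeff:
  assumes "is_SLD rho Drho L"
  shows "complex_of_real (((s m)\<^sup>2 + (s l)\<^sup>2) / 2) * braket (w m) (L *v w l) = braket (w m) (Drho *v w l)"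
proof -
  have "Drho = (1/2::real) *\<^sub>R (rho ** L + L ** rho)" using assms by (simp add: is_SLD_def)
  hence "braket (w m) (Drho *v w l) = (1/2::real) * braket (w m) ((rho ** L + L ** rho) *v w l)"
    by (simp add: mv_scaleR_mat braket_scaleR_right)
  also have "\<dots> = complex_of_real (((s m)\<^sup>2 + (s l)\<^sup>2) / 2) * braket (w m) (L *v w l)"
    by (simp add: K)
  finally show ?thesis by simp
qed

definition "X m l = 2 * braket (w m) (Drho *v w l) / complex_of_real ((s m)\<^sup>2 + (s l)\<^sup>2)"
definition "L0 = (\<Sum>m\<in>UNIV. \<Sum>l\<in>UNIV. ketbra (X m l *s w m) (w l))"

lemma L0_w: "L0 *v w l = (\<Sum>m\<in>UNIV. X m l *s w m)"
  by (simp add: L0_def sum_matrix_vector ketbra_mult_vec ww mult_if01' smult_if)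

lemma L0_elem: "braket (w m) (L0 *v w l) = X m l"
  by (simp add: L0_w braket_sum_right braket_smult_right ww mult_if01)

lemma pos: "(s m)\<^sup>2 + (s l)\<^sup>2 > 0"
  using spos[of m] by (simp add: add_pos_nonneg)

lemma X_cnj: "cnj (X l m) = X m l"
proof -
  have "cnj (braket (w l) (Drho *v w m)) = braket (w m) (Drho *v w l)"
    by (simp add: braket_cnj braket_adj[of "w m" Drho] adj_Drho)
  thus ?thesis by (simp add: X_def add.commute)
qed

lemma SLD_exists: "is_SLD rho Drho L0"
proof -
  have h: "adj L0 = L0"
  proof (rule onb_mat_eq[OF onw])
    fix m l
    have "braket (w m) (adj L0 *v w l) = cnj (braket (w l) (L0 *v w m))"
      by (simp add: braket_adj[of "w m" "adj L0"] braket_cnj)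
    thus "braket (w m) (adj L0 *v w l) = braket (w m) (L0 *v w l)"
      by (simp add: L0_elem X_cnj)
  qed
  have e: "Drho = (1/2::real) *\<^sub>R (rho ** L0 + L0 ** rho)"
  proof (rule onb_mat_eq[OF onw])
    fix m l
    have "braket (w m) (((1/2::real) *\<^sub>R (rho ** L0 + L0 ** rho)) *v w l)
       = (1/2::real) * (complex_of_real ((s m)\<^sup>2 + (s l)\<^sup>2) * X m l)"
      by (simp add: mv_scaleR_mat braket_scaleR_right K L0_elem)
    also have "\<dots> = braket (w m) (Drho *v w l)"
    proof -
      have nz: "complex_of_real ((s m)\<^sup>2 + (s l)\<^sup>2) \<noteq> 0" using pos[of m l] by (metis of_real_eq_0_iff order_less_irrefl)
      show ?thesis using nz by (simp add: X_def del: of_real_add of_real_power)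
    qed
    finally show "braket (w m) (Drho *v w l) = braket (w m) (((1/2::real) *\<^sub>R (rho ** L0 + L0 ** rho)) *v w l)"
      by simp
  qed
  show ?thesis using h e by (simp add: is_SLD_def hermitian_def)
qed

lemma trace_LrhoL:
  assumes "adj L' = L'"
  shows "trace (L ** rho ** L') = (\<Sum>l\<in>UNIV. braket (L' *v v l) (L *v v l))"
  by (simp add: rho_def matrix_mult_sum_right matrix_mult_sum_left trace_sum mat_ketbra ketbra_mat
      trace_ketbra assms)

end




context pt begin

lemma key:
  assumes "is_SLD rho Drho L"
  shows "(\<Sum>l\<in>UNIV. Re (braket (2 *\<^sub>R a l - L *v v l) (2 *\<^sub>R a l - L *v v l)))
       = 4 * (\<Sum>l\<in>UNIV. Re (braket (a l) (a l))) - Re (trace (L ** rho ** L))"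
proof -
  have herm: "adj L = L" and D: "Drho = (1/2::real) *\<^sub>R (rho ** L + L ** rho)"
    using assms by (auto simp: is_SLD_def hermitian_def)
  have tt: "trace (rho ** L ** L) = trace (L ** rho ** L)"
    by (metis trace_mul_sym matrix_mul_assoc)
  have t1: "trace (Drho ** L) = trace (L ** rho ** L)"
  proof -
    have "Drho ** L = (1/2::real) *\<^sub>R (rho ** L ** L + L ** rho ** L)"
      by (simp add: D scalar_matrix_assoc[symmetric] matrix_add_rdistrib')
    hence "trace (Drho ** L) = (1/2::real) *\<^sub>R (trace (rho ** L ** L) + trace (L ** rho ** L))"
      by (simp add: trace_scaleR trace_add)
    thus ?thesis by (simp add: tt cscaleR)
  qed
  have t2: "trace (Drho ** L) = (\<Sum>l\<in>UNIV. braket (L *v v l) (a l) + braket (L *v a l) (v l))"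
    by (simp add: Drho_def matrix_mult_sum_left matrix_add_rdistrib' trace_sum trace_add
        ketbra_mat trace_ketbra herm)
  have t3: "braket (L *v a l) (v l) = cnj (braket (L *v v l) (a l))" for l
    by (metis braket_adj braket_cnj herm)
  have t4: "trace (L ** rho ** L) = (\<Sum>l\<in>UNIV. braket (L *v v l) (L *v v l))"
    by (rule trace_LrhoL[OF herm])
  have R0: "trace (L ** rho ** L) = (\<Sum>l\<in>UNIV. braket (L *v v l) (a l) + cnj (braket (L *v v l) (a l)))"
    using t1 t2 t3 by simp
  have R: "Re (trace (L ** rho ** L)) = (\<Sum>l\<in>UNIV. 2 * Re (braket (L *v v l) (a l)))"
  proof -
    have c2: "Re (z + cnj z) = 2 * Re z" for z :: complex by simp
    show ?thesis by (simp only: R0 Re_sum c2)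
  qed
  have R2: "Re (trace (L ** rho ** L)) = (\<Sum>l\<in>UNIV. Re (braket (L *v v l) (L *v v l)))"
    using t4 by (simp add: Re_sum)
  have e: "Re (braket (2 *\<^sub>R a l - L *v v l) (2 *\<^sub>R a l - L *v v l))
      = 4 * Re (braket (a l) (a l)) - 4 * Re (braket (L *v v l) (a l)) + Re (braket (L *v v l) (L *v v l))" for l
  proof -
    have c: "Re (braket (a l) (L *v v l)) = Re (braket (L *v v l) (a l))"
      by (subst cnj_braket_swap) simp
    show ?thesis
      by (simp add: braket_diff_left braket_diff_right braket_scaleR_left braket_scaleR_right c)
  qed
  have S: "(\<Sum>l\<in>UNIV. 4 * Re (braket (L *v v l) (a l))) = 2 * Re (trace (L ** rho ** L))"
    using R by (simp add: sum_distrib_left)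
  have "(\<Sum>l\<in>UNIV. Re (braket (2 *\<^sub>R a l - L *v v l) (2 *\<^sub>R a l - L *v v l)))
     = (\<Sum>l\<in>UNIV. 4 * Re (braket (a l) (a l))) - (\<Sum>l\<in>UNIV. 4 * Re (braket (L *v v l) (a l)))
       + (\<Sum>l\<in>UNIV. Re (braket (L *v v l) (L *v v l)))"
    by (simp add: e sum.distrib sum_subtractf del: Re_sum)
  thus ?thesis using S R2 by (simp add: sum_distrib_left[symmetric])
qed

lemma key_zero:
  assumes "is_SLD rho Drho L" and "Re (trace (L ** rho ** L)) = 4 * (\<Sum>l\<in>UNIV. Re (braket (a l) (a l)))"
  shows "L *v v l = 2 *\<^sub>R a l"
proof -
  have "(\<Sum>l\<in>UNIV. Re (braket (2 *\<^sub>R a l - L *v v l) (2 *\<^sub>R a l - L *v v l))) = 0"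
    using key[OF assms(1)] assms(2) by simp
  hence "\<forall>l\<in>UNIV. Re (braket (2 *\<^sub>R a l - L *v v l) (2 *\<^sub>R a l - L *v v l)) = 0"
    by (subst (asm) sum_nonneg_eq_0_iff) (auto simp: Re_braket_self_nonneg)
  hence "braket (2 *\<^sub>R a l - L *v v l) (2 *\<^sub>R a l - L *v v l) = 0"
    by (metis braket_self_real of_real_0 UNIV_I)
  hence "2 *\<^sub>R a l - L *v v l = 0" by (rule braket_self_eq0)
  thus ?thesis by simp
qed

lemma herm_cons:
  assumes "adj L = L" "\<And>l. L *v v l = 2 *\<^sub>R a l"
  shows "braket (v m) (a l) = braket (a m) (v l)"
proof -
  have "2 * braket (v m) (a l) = braket (v m) (L *v v l)"
    by (simp add: assms(2) braket_scaleR_right)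
  also have "\<dots> = braket (L *v v m) (v l)" by (metis braket_adj assms(1))
  also have "\<dots> = 2 * braket (a m) (v l)" by (simp add: assms(2) braket_scaleR_left)
  finally show ?thesis by simp
qed

lemma rev_dir:
  assumes "is_SLD rho Drho L"
    and off: "\<And>m l. m \<noteq> l \<Longrightarrow> braket (w m) (a l) = 0"
    and dg: "\<And>l. Im (braket (w l) (a l)) = 0"
  shows "L *v v l = 2 *\<^sub>R a l"
proof (rule onb_vec_eq[OF onw])
  fix m
  have sc: "complex_of_real (((s m)\<^sup>2 + (s l)\<^sup>2) / 2) * braket (w m) (L *v w l)
      = complex_of_real (s l) * braket (w m) (a l) + complex_of_real (s m) * braket (a m) (w l)"
    using SLD_coeff[OF assms(1)] Drho_elem by simp
  have Lv: "braket (w m) (L *v v l) = complex_of_real (s l) * braket (w m) (L *v w l)"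
    by (simp add: v_def mv_smult braket_smult_right)
  have nz: "complex_of_real (((s m)\<^sup>2 + (s l)\<^sup>2) / 2) \<noteq> 0"
    using pos[of m l] by (metis half_gt_zero of_real_eq_0_iff order_less_irrefl)
  show "braket (w m) (L *v v l) = braket (w m) (2 *\<^sub>R a l)"
  proof (cases "m = l")
    case False
    have "braket (a m) (w l) = 0" using off[of l m] False by (metis braket_cnj complex_cnj_zero)
    hence "braket (w m) (L *v w l) = 0" using sc nz off[OF False] by simp
    thus ?thesis using off[OF False] Lv by (simp add: braket_scaleR_right)
  next
    case True
    define z where "z = braket (w l) (a l)"
    have zr: "z = complex_of_real (Re z)" using dg[of l] by (simp add: z_def complex_eq_iff)
    have "braket (a l) (w l) = z"
      using dg[of l] braket_cnj[of "w l" "a l", symmetric] by (simp add: z_def complex_eq_iff)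
    hence "complex_of_real ((s l)\<^sup>2) * braket (w l) (L *v w l) = 2 * complex_of_real (s l) * z"
      using sc True z_def by (simp add: algebra_simps)
    hence "complex_of_real (s l) * (complex_of_real (s l) * braket (w l) (L *v w l) - 2 * z) = 0"
      by (simp add: algebra_simps power2_eq_square)
    hence "complex_of_real (s l) * braket (w l) (L *v w l) = 2 * z" using spos[of l] by simp
    thus ?thesis using True Lv by (simp add: braket_scaleR_right z_def)
  qed
qed

end




lemma blin_mv: "bounded_linear (\<lambda>A::complex^'n^'m. A *v x)"
  unfolding linear_conv_bounded_linear[symmetric]
  by (rule linearI) (simp_all add: matrix_vector_mult_add_rdistrib mv_scaleR_mat)

lemma bb_ketbra: "bounded_bilinear (ketbra :: complex^'d \<Rightarrow> _)"
  unfolding bilinear_conv_bounded_bilinear[symmetric] bilinear_def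
  by (auto intro!: linearI simp: ketbra_add_left ketbra_add_right ketbra_scaleR_left ketbra_scaleR_right)

lemma bb_braket: "bounded_bilinear (braket :: complex^'d \<Rightarrow> _)"
  unfolding bilinear_conv_bounded_bilinear[symmetric] bilinear_def
  by (auto intro!: linearI simp: braket_add_left braket_add_right braket_scaleR_left braket_scaleR_right cscaleR)

lemma deriv_const:
  fixes f g :: "real^'p \<Rightarrow> complex^'d" and F :: "complex \<Rightarrow> 'c::real_normed_vector"
  assumes "(f has_derivative f') (at x)" "(g has_derivative g') (at x)" "open S" "x \<in> S"
    "\<And>y. y \<in> S \<Longrightarrow> F (braket (f y) (g y)) = c" "bounded_linear F"
  shows "F (braket (f x) (g' h) + braket (f' h) (g x)) = 0"
proof -
  have d1: "((\<lambda>y. F (braket (f y) (g y))) has_derivative (\<lambda>h. F (braket (f x) (g' h) + braket (f' h) (g x)))) (at x)"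
    using bounded_linear.has_derivative[OF assms(6) bounded_bilinear.FDERIV[OF bb_braket assms(1,2)]] .
  have d2: "((\<lambda>y. F (braket (f y) (g y))) has_derivative (\<lambda>h. 0)) (at x)"
    by (rule has_derivative_transform_within_open[of "\<lambda>y. c" _ _ _ S]) (use assms in auto)
  have "(\<lambda>h. F (braket (f x) (g' h) + braket (f' h) (g x))) = (\<lambda>h. 0)"
    using has_derivative_unique[OF d1 d2] .
  thus ?thesis by metis
qed

lemma deriv_zero_const:
  assumes "(f has_derivative f') (at x)" "open S" "x \<in> S" "\<And>y. y \<in> S \<Longrightarrow> f y = c"
  shows "f' = (\<lambda>h. 0)"
proof -
  have d2: "(f has_derivative (\<lambda>h. 0)) (at x)"
    by (rule has_derivative_transform_within_open[of "\<lambda>y. c" _ _ _ S]) (use assms in auto)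
  show ?thesis using has_derivative_unique[OF assms(1) d2] .
qed

lemma basis_axis: "(b::real^'p) \<in> Basis \<Longrightarrow> \<exists>j. b = axis j 1"
  by (auto simp: Basis_vec_def)

lemma algebra_core:
  fixes w v a dw :: "'d \<Rightarrow> complex^'d" and s :: "'d \<Rightarrow> real"
  assumes spos: "\<And>l. s l > 0" and vdef: "\<And>l. v l = complex_of_real (s l) *s w l"
   and F1: "\<And>m l. braket (w m) (dw l) + braket (dw m) (w l) = 0"
   and F2: "\<And>m l. m \<noteq> l \<Longrightarrow> braket (w m) (a l) + braket (dw m) (v l) = 0"
   and F2': "\<And>l. Im (braket (w l) (a l) + braket (dw l) (v l)) = 0"
   and F4: "\<And>m l. m \<noteq> l \<Longrightarrow> braket (v m) (a l) + braket (a m) (v l) = 0"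
   and F3: "\<And>m l. braket (v m) (a l) = braket (a m) (v l)"
  shows "braket (w m) (dw l) = 0"
proof (cases "m = l")
  case False
  have "braket (v m) (a l) = 0" using F3[of m l] F4[OF False] by simp
  hence "complex_of_real (s m) * braket (w m) (a l) = 0" by (simp add: vdef braket_smult_left)
  hence "braket (w m) (a l) = 0" using spos[of m] by simp
  hence "braket (dw m) (v l) = 0" using F2[OF False] by simp
  hence "complex_of_real (s l) * braket (dw m) (w l) = 0" by (simp add: vdef braket_smult_right)
  hence "braket (dw m) (w l) = 0" using spos[of l] by simp
  thus ?thesis using F1[of m l] by simp
next
  case True
  have z: "braket (v l) (a l) = cnj (braket (v l) (a l))" using F3[of l l] by (simp add: braket_cnj)
  have "Im (braket (v l) (a l)) = 0" using z by (auto simp: complex_eq_iff)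
  hence "s l * Im (braket (w l) (a l)) = 0" by (simp add: vdef braket_smult_left)
  hence i1: "Im (braket (w l) (a l)) = 0" using spos[of l] by simp
  have "Im (braket (dw l) (v l)) = 0" using F2'[of l] i1 by simp
  hence "s l * Im (braket (dw l) (w l)) = 0" by (simp add: vdef braket_smult_right)
  hence i2: "Im (braket (dw l) (w l)) = 0" using spos[of l] by simp
  have "cnj (braket (dw l) (w l)) + braket (dw l) (w l) = 0" using F1[of l l] by (simp add: braket_cnj)
  hence "Re (braket (dw l) (w l)) = 0" by (simp add: complex_eq_iff)
  hence "braket (dw l) (w l) = 0" using i2 by (simp add: complex_eq_iff)
  thus ?thesis using True by (metis braket_cnj complex_cnj_zero)
qed




theorem lemma2p10:
  fixes \<Theta> :: "(real^'p) set"
    and Ups :: "'d \<Rightarrow> real^'p \<Rightarrow> complex^'d^'d"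
    and psi0 :: "complex^'d"
    and w :: "'d \<Rightarrow> real^'p \<Rightarrow> complex^'d"
    and p :: "'d \<Rightarrow> real^'p \<Rightarrow> real"
  assumes open_Theta: "open \<Theta>" and conn_Theta: "connected \<Theta>"
    and psi0_unit: "braket psi0 psi0 = 1"
    and Ups_diff: "\<And>k \<theta>. \<theta> \<in> \<Theta> \<Longrightarrow> Ups k differentiable (at \<theta>)"
    and Ups_complete: "\<And>\<theta>. \<theta> \<in> \<Theta> \<Longrightarrow> (\<Sum>k\<in>UNIV. adj (Ups k \<theta>) ** Ups k \<theta>) = mat 1"
    and Ups_canonical: "\<And>j k \<theta>. \<theta> \<in> \<Theta> \<Longrightarrow>
          trace (Ups k \<theta> ** ketbra psi0 psi0 ** adj (Ups j \<theta>))
            = (if j = k then complex_of_real (p k \<theta>) else 0)"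
    and Ups_psi0: "\<And>k \<theta>. \<theta> \<in> \<Theta> \<Longrightarrow>
          Ups k \<theta> *v psi0 = complex_of_real (sqrt (p k \<theta>)) *s w k \<theta>"
    and w_orthonormal: "\<And>j k \<theta>. \<theta> \<in> \<Theta> \<Longrightarrow>
          braket (w j \<theta>) (w k \<theta>) = (if j = k then 1 else 0)"
    and w_diff: "\<And>k \<theta>. \<theta> \<in> \<Theta> \<Longrightarrow> w k differentiable (at \<theta>)"
    and p_pos: "\<And>j \<theta>. \<theta> \<in> \<Theta> \<Longrightarrow> p j \<theta> > 0"
  shows "(\<forall>\<theta>\<in>\<Theta>. SLD_QFI (channel_out Ups (ketbra psi0 psi0)) \<theta> = C_Ups Ups (ketbra psi0 psi0) \<theta>)
     \<longleftrightarrow> (\<forall>k. \<forall>\<theta>\<in>\<Theta>. \<forall>\<theta>'\<in>\<Theta>. w k \<theta> = w k \<theta>')"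
proof -
  define rh where "rh = channel_out Ups (ketbra psi0 psi0)"
  define v where "v l \<theta> = Ups l \<theta> *v psi0" for l \<theta>
  define DU where "DU l \<theta> = frechet_derivative (Ups l) (at \<theta>)" for l \<theta>
  define Dw where "Dw l \<theta> = frechet_derivative (w l) (at \<theta>)" for l \<theta>
  define sq where "sq l \<theta> = sqrt (p l \<theta>)" for l \<theta>
  define A where "A \<theta> j l = DU l \<theta> (axis j 1) *v psi0" for \<theta> j l
  have hU: "(Ups l has_derivative DU l \<theta>) (at \<theta>)" if "\<theta> \<in> \<Theta>" for l \<theta>
    using Ups_diff[OF that] frechet_derivative_works DU_def by metis
  have hv: "(v l has_derivative (\<lambda>h. DU l \<theta> h *v psi0)) (at \<theta>)" if "\<theta> \<in> \<Theta>" for l \<theta>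
    unfolding v_def using bounded_linear.has_derivative[OF blin_mv hU[OF that]] .
  have hw: "(w l has_derivative Dw l \<theta>) (at \<theta>)" if "\<theta> \<in> \<Theta>" for l \<theta>
    using w_diff[OF that] frechet_derivative_works Dw_def by metis
  have sqpos: "sq l \<theta> > 0" if "\<theta> \<in> \<Theta>" for l \<theta>
    using p_pos[OF that] by (simp add: sq_def)
  have veq: "v l \<theta> = complex_of_real (sq l \<theta>) *s w l \<theta>" if "\<theta> \<in> \<Theta>" for l \<theta>
    using Ups_psi0[OF that] by (simp add: v_def sq_def)
  have ONw: "ON (\<lambda>l. w l \<theta>)" if "\<theta> \<in> \<Theta>" for \<theta>
    using w_orthonormal[OF that] by (simp add: ON_def)
  have ptt: "pt (\<lambda>l. w l \<theta>) (\<lambda>l. sq l \<theta>)" if "\<theta> \<in> \<Theta>" for \<theta>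
    using ONw[OF that] sqpos[OF that] by (simp add: pt_def)
  have pv: "pt.v (\<lambda>l. w l \<theta>) (\<lambda>l. sq l \<theta>) = (\<lambda>l. v l \<theta>)" if "\<theta> \<in> \<Theta>" for \<theta>
    by (simp add: pt.v_def[OF ptt[OF that]] veq[OF that] fun_eq_iff)
  have ch: "rh = (\<lambda>\<theta>. \<Sum>l\<in>UNIV. ketbra (v l \<theta>) (v l \<theta>))"
    by (simp add: rh_def fun_eq_iff channel_out_def v_def mat_ketbra ketbra_mat)
  have prho: "pt.rho (\<lambda>l. w l \<theta>) (\<lambda>l. sq l \<theta>) = rh \<theta>" if "\<theta> \<in> \<Theta>" for \<theta>
    by (simp add: pt.rho_def[OF ptt[OF that]] pv[OF that] ch)
  have hch: "(rh has_derivative (\<lambda>h. \<Sum>l\<in>UNIV. ketbra (v l \<theta>) (DU l \<theta> h *v psi0)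
               + ketbra (DU l \<theta> h *v psi0) (v l \<theta>))) (at \<theta>)" if "\<theta> \<in> \<Theta>" for \<theta>
    unfolding ch
    by (rule has_derivative_sum, rule bounded_bilinear.FDERIV[OF bb_ketbra hv[OF that] hv[OF that]])
  have pD: "pderiv rh \<theta> j = pt.Drho (\<lambda>l. w l \<theta>) (\<lambda>l. sq l \<theta>) (A \<theta> j)" if "\<theta> \<in> \<Theta>" for \<theta> j
    by (simp add: pderiv_def frechet_derivative_at[OF hch[OF that], symmetric]
        pt.Drho_def[OF ptt[OF that]] pv[OF that] A_def add.commute)
  have Cent: "C_Ups Ups (ketbra psi0 psi0) \<theta> $ j $ k = 4 * (\<Sum>l\<in>UNIV. Re (braket (A \<theta> k l) (A \<theta> j l)))" for \<theta> j k
    by (simp add: C_Ups_def pderiv_def A_def DU_def mat_ketbra ketbra_mat trace_ketbra)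
  define Lsel where "Lsel \<theta> j = (SOME L. is_SLD (rh \<theta>) (pderiv rh \<theta> j) L)" for \<theta> j
  have Lsel: "is_SLD (rh \<theta>) (pderiv rh \<theta> j) (Lsel \<theta> j)" if "\<theta> \<in> \<Theta>" for \<theta> j
    unfolding Lsel_def
    by (rule someI[of _ "pt.L0 (\<lambda>l. w l \<theta>) (\<lambda>l. sq l \<theta>) (A \<theta> j)"])
       (use pt.SLD_exists[OF ptt[OF that]] prho[OF that] pD[OF that] in simp)
  have Hent: "SLD_QFI rh \<theta> $ j $ k = Re (trace (Lsel \<theta> j ** rh \<theta> ** Lsel \<theta> k))" for \<theta> j k
    by (simp add: SLD_QFI_def Lsel_def Let_def)
  have herm: "adj (Lsel \<theta> k) = Lsel \<theta> k" if "\<theta> \<in> \<Theta>" for \<theta> k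
    using Lsel[OF that] by (simp add: is_SLD_def hermitian_def)
  have Htr: "trace (Lsel \<theta> j ** rh \<theta> ** Lsel \<theta> k)
      = (\<Sum>l\<in>UNIV. braket (Lsel \<theta> k *v v l \<theta>) (Lsel \<theta> j *v v l \<theta>))" if "\<theta> \<in> \<Theta>" for \<theta> j k
    using pt.trace_LrhoL[OF ptt[OF that] herm[OF that]] prho[OF that] pv[OF that] by simp
  have F1: "braket (w m \<theta>) (Dw l \<theta> h) + braket (Dw m \<theta> h) (w l \<theta>) = 0" if "\<theta> \<in> \<Theta>" for m l \<theta> h
    by (rule deriv_const[OF hw[OF that] hw[OF that] open_Theta that _ bounded_linear_ident,
          where c = "if m = l then 1 else 0"]) (simp add: w_orthonormal)
  have F2: "braket (w m \<theta>) (A \<theta> j l) + braket (Dw m \<theta> (axis j 1)) (v l \<theta>) = 0"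
    if "\<theta> \<in> \<Theta>" "m \<noteq> l" for m l \<theta> j
    unfolding A_def
    by (rule deriv_const[OF hw[OF that(1)] hv[OF that(1)] open_Theta that(1) _ bounded_linear_ident,
          where c = 0]) (simp add: veq braket_smult_right w_orthonormal that(2))
  have F2': "Im (braket (w l \<theta>) (A \<theta> j l) + braket (Dw l \<theta> (axis j 1)) (v l \<theta>)) = 0"
    if "\<theta> \<in> \<Theta>" for l \<theta> j
    unfolding A_def
    by (rule deriv_const[OF hw[OF that(1)] hv[OF that(1)] open_Theta that(1) _ bounded_linear_Im,
          where c = 0]) (simp add: veq braket_smult_right w_orthonormal)
  have F4: "braket (v m \<theta>) (A \<theta> j l) + braket (A \<theta> j m) (v l \<theta>) = 0"
    if "\<theta> \<in> \<Theta>" "m \<noteq> l" for m l \<theta> j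
    unfolding A_def
    by (rule deriv_const[OF hv[OF that(1)] hv[OF that(1)] open_Theta that(1) _ bounded_linear_ident,
          where c = 0]) (simp add: veq braket_smult_right braket_smult_left w_orthonormal that(2))
  show ?thesis
  proof
    assume HC: "\<forall>\<theta>\<in>\<Theta>. SLD_QFI (channel_out Ups (ketbra psi0 psi0)) \<theta> = C_Ups Ups (ketbra psi0 psi0) \<theta>"
    show "\<forall>k. \<forall>\<theta>\<in>\<Theta>. \<forall>\<theta>'\<in>\<Theta>. w k \<theta> = w k \<theta>'"
    proof
      fix k
      have zero: "Dw k \<theta> = (\<lambda>h. 0)" if th: "\<theta> \<in> \<Theta>" for \<theta>
      proof -
        have ax: "Dw k \<theta> (axis j 1) = 0" for j
        proof -
          interpret P: pt "\<lambda>l. w l \<theta>" "\<lambda>l. sq l \<theta>" "A \<theta> j" using ptt[OF th] .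
          have isl: "is_SLD P.rho P.Drho (Lsel \<theta> j)" using Lsel[OF th] prho[OF th] pD[OF th] by simp
          have "SLD_QFI rh \<theta> $ j $ j = C_Ups Ups (ketbra psi0 psi0) \<theta> $ j $ j"
            using HC th by (simp add: rh_def)
          hence eq: "Re (trace (Lsel \<theta> j ** P.rho ** Lsel \<theta> j)) = 4 * (\<Sum>l\<in>UNIV. Re (braket (A \<theta> j l) (A \<theta> j l)))"
            using prho[OF th] by (simp add: Hent Cent)
          have Lv: "Lsel \<theta> j *v P.v l = 2 *\<^sub>R A \<theta> j l" for l by (rule P.key_zero[OF isl eq])
          have F3: "braket (P.v m) (A \<theta> j l) = braket (A \<theta> j m) (P.v l)" for m l
            by (rule P.herm_cons[OF herm[OF th] Lv])
          have F3': "braket (v m \<theta>) (A \<theta> j l) = braket (A \<theta> j m) (v l \<theta>)" for m l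
            using F3[of m l] pv[OF th] by simp
          note AC = algebra_core[where w = "\<lambda>l. w l \<theta>" and v = "\<lambda>l. v l \<theta>" and a = "A \<theta> j"
              and s = "\<lambda>l. sq l \<theta>" and dw = "\<lambda>l. Dw l \<theta> (axis j 1)",
              OF sqpos[OF th] veq[OF th] F1[OF th] F2[OF th] F2'[OF th] F4[OF th] F3']
          have "braket (w m \<theta>) (Dw k \<theta> (axis j 1)) = 0" for m
            using AC[of m k] by simp
          thus ?thesis by (rule onb_zero[OF ONw[OF th]])
        qed
        show ?thesis
        proof (rule linear_eq_stdbasis)
          show "linear (Dw k \<theta>)" by (rule has_derivative_linear[OF hw[OF th]])
          show "linear (\<lambda>h::real^'p. 0::complex^'d)" by (rule linearI) simp_all
          fix b :: "real^'p" assume "b \<in> Basis"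
          then obtain j where "b = axis j 1" using basis_axis by blast
          thus "Dw k \<theta> b = 0" using ax by simp
        qed
      qed
      have cont: "continuous_on \<Theta> (w k)"
      proof (rule differentiable_imp_continuous_on)
        show "w k differentiable_on \<Theta>"
          unfolding differentiable_on_def using w_diff differentiable_at_withinI by blast
      qed
      have "w k constant_on \<Theta>"
      proof (rule has_derivative_zero_connected_constant_on[OF conn_Theta open_Theta finite.emptyI cont])
        show "\<forall>x\<in>\<Theta> - {}. (w k has_derivative (\<lambda>h. 0)) (at x within \<Theta>)"
        proof
          fix x assume "x \<in> \<Theta> - {}"
          hence x: "x \<in> \<Theta>" by simp
          show "(w k has_derivative (\<lambda>h. 0)) (at x within \<Theta>)"
          proof -
            have "(w k has_derivative Dw k x) (at x within \<Theta>)"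
              by (rule has_derivative_at_withinI[OF hw[OF x]])
            thus ?thesis using zero[OF x] by simp
          qed
        qed
      qed
      then obtain c where c: "\<And>x. x \<in> \<Theta> \<Longrightarrow> w k x = c" unfolding constant_on_def by blast
      show "\<forall>\<theta>\<in>\<Theta>. \<forall>\<theta>'\<in>\<Theta>. w k \<theta> = w k \<theta>'" using c by simp
    qed
  next
    assume const: "\<forall>k. \<forall>\<theta>\<in>\<Theta>. \<forall>\<theta>'\<in>\<Theta>. w k \<theta> = w k \<theta>'"
    show "\<forall>\<theta>\<in>\<Theta>. SLD_QFI (channel_out Ups (ketbra psi0 psi0)) \<theta> = C_Ups Ups (ketbra psi0 psi0) \<theta>"
    proof
      fix \<theta> assume th: "\<theta> \<in> \<Theta>"
      have Dz: "Dw l \<theta> = (\<lambda>h. 0)" for l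
        by (rule deriv_zero_const[OF hw[OF th] open_Theta th, where c = "w l \<theta>"]) (use const th in blast)
      have LV: "Lsel \<theta> j *v v l \<theta> = 2 *\<^sub>R A \<theta> j l" for j l
      proof -
        interpret P: pt "\<lambda>l. w l \<theta>" "\<lambda>l. sq l \<theta>" "A \<theta> j" using ptt[OF th] .
        have isl: "is_SLD P.rho P.Drho (Lsel \<theta> j)" using Lsel[OF th] prho[OF th] pD[OF th] by simp
        have off: "braket (w m \<theta>) (A \<theta> j l) = 0" if "m \<noteq> l" for m l
          using F2[OF th that, of j] Dz by simp
        have dg: "Im (braket (w l \<theta>) (A \<theta> j l)) = 0" for l
          using F2'[OF th, of l j] Dz by simp
        show ?thesis using P.rev_dir[OF isl off dg] pv[OF th] by simp
      qed
      show "SLD_QFI (channel_out Ups (ketbra psi0 psi0)) \<theta> = C_Ups Ups (ketbra psi0 psi0) \<theta>"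
        unfolding rh_def[symmetric]
        by (simp add: vec_eq_iff Hent Cent Htr[OF th] LV braket_scaleR_left braket_scaleR_right
            Re_sum sum_distrib_left)
    qed
  qed
qed


end
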